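(* Let $a_1,\dots,a_t$ be positive integers with $\sum_{i=1}^t a_i=2b$ for an integer $b$. Consider the two-machine instance with three chains of jobs $j^0_1\prec\dots\prec j^0_t$, $j^1_1\prec\dots\prec j^1_{t+1}$, $j^2_1\prec\dots\prec j^2_{t+1}$ (no precedence constraints between different chains), where $j^0_i$ has processing time $a_i$ and every $j^1_i$ and $j^2_i$ has processing time $2b$. Then there is a subset $S\subseteq\{1,\dots,t\}$ with $\sum_{i\in S}a_i=\sum_{i\notin S}a_i$ if and only if this instance has a feasible non-preemptive schedule on two identical machines with makespan at most $(2t+3)b$.
   Context: A schedule assigns each job $j$ a start time $s_j\in\mathbb N$; it is feasible if $s_i+p_i\le s_j$ whenever $i\prec j$ and at every time $t$ at most two jobs $j$ satisfy $t\in[s_j,s_j+p_j)$. The makespan is $\max_j(s_j+p_j)$. *)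

theory Defs
  imports Main
begin

definition feasible2 :: "'j set \<Rightarrow> ('j \<Rightarrow> 'j \<Rightarrow> bool) \<Rightarrow> ('j \<Rightarrow> nat) \<Rightarrow> ('j \<Rightarrow> nat) \<Rightarrow> bool" where
  "feasible2 J prec p s \<longleftrightarrow>
     (\<forall>i\<in>J. \<forall>j\<in>J. prec i j \<longrightarrow> s i + p i \<le> s j) \<and>
     (\<forall>\<tau>::nat. card {j\<in>J. s j \<le> \<tau> \<and> \<tau> < s j + p j} \<le> 2)"

definition makespan :: "'j set \<Rightarrow> ('j \<Rightarrow> nat) \<Rightarrow> ('j \<Rightarrow> nat) \<Rightarrow> nat" where
  "makespan J p s = Max ((\<lambda>j. s j + p j) ` J)"

text \<open>The instance: job (c,i) is the i-th job of chain c.\<close>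

definition inst_jobs :: "nat \<Rightarrow> (nat \<times> nat) set" where
  "inst_jobs t = {(0, i) | i. 1 \<le> i \<and> i \<le> t} \<union>
                 {(c, i) | c i. (c = 1 \<or> c = 2) \<and> 1 \<le> i \<and> i \<le> t + 1}"

definition inst_prec :: "nat \<times> nat \<Rightarrow> nat \<times> nat \<Rightarrow> bool" where
  "inst_prec x y \<longleftrightarrow> fst x = fst y \<and> snd x < snd y"

definition inst_p :: "(nat \<Rightarrow> nat) \<Rightarrow> nat \<Rightarrow> nat \<times> nat \<Rightarrow> nat" where
  "inst_p a b x = (if fst x = 0 then a (snd x) else 2 * b)"

end

theory Submission
  imports Defs
begin


lemma cover_split:
  assumes "finite X" "\<forall>x\<in>X. l x < r x \<and> r x \<le> n"
    "\<forall>p<n. card {x\<in>X. l x \<le> p \<and> p < r x} \<le> 2"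
    "(\<Sum>x\<in>X. r x - l x) = 2*n"
  shows "\<exists>G\<subseteq>X. (\<Sum>x\<in>G. r x - l x) = (n::nat)"
  using assms
proof (induction n arbitrary: X r rule: less_induct)
  case (less n X r)
  show ?case
  proof (cases "n = 0")
    case True then show ?thesis by (intro exI[of _ "{}"]) auto
  next
    case False
    define c where "c p = card {x\<in>X. l x \<le> p \<and> p < r x}" for p
    have dc: "(\<Sum>p<n. c p) = (\<Sum>x\<in>X. r x - l x)"
    proof -
      have "(\<Sum>p<n. c p) = (\<Sum>p<n. \<Sum>x\<in>X. if l x \<le> p \<and> p < r x then 1 else 0)"
        unfolding c_def using less.prems(1) by (simp add: sum.If_cases Int_def)
      also have "\<dots> = (\<Sum>x\<in>X. \<Sum>p<n. if l x \<le> p \<and> p < r x then 1 else 0)"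
        by (rule sum.swap)
      also have "\<dots> = (\<Sum>x\<in>X. r x - l x)"
      proof (rule sum.cong[OF refl])
        fix x assume "x \<in> X"
        then have "{..<n} \<inter> {p. l x \<le> p \<and> p < r x} = {l x..<r x}" using less.prems(2) by auto
        then show "(\<Sum>p<n. if l x \<le> p \<and> p < r x then 1 else 0) = r x - l x"
          by (simp add: sum.If_cases)
      qed
      finally show ?thesis .
    qed
    have "(\<Sum>p<n. c p) = (\<Sum>p<n-1. c p) + c (n-1)"
      using False by (metis Suc_pred' bot_nat_0.not_eq_extremum sum.lessThan_Suc)
    moreover have "(\<Sum>p<n-1. c p) \<le> (\<Sum>p<n-1. 2)"
      by (rule sum_mono) (use less.prems(3) False c_def in auto)
    ultimately have "c (n-1) \<ge> 2" using dc less.prems(4) False by simp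
    moreover have "c (n-1) \<le> 2" using less.prems(3) False c_def by simp
    ultimately have "card {x\<in>X. l x \<le> n-1 \<and> n-1 < r x} = 2" unfolding c_def by simp
    then obtain x y where xy: "{x\<in>X. l x \<le> n-1 \<and> n-1 < r x} = {x,y}" "x \<noteq> y"
      by (auto simp: card_2_iff)
    have xX: "x \<in> X" "l x \<le> n-1" "n-1 < r x" and yX: "y \<in> X" "l y \<le> n-1" "n-1 < r y"
      using xy(1) by (auto simp: set_eq_iff)
    have rxy: "r x = n" "r y = n" using xX yX less.prems(2) by force+
    obtain J K where JK: "J \<in> X" "K \<in> X" "J \<noteq> K" "l K \<le> l J" "r J = n" "r K = n"
      "l J \<le> n-1" "l K \<le> n-1"
    proof (cases "l y \<le> l x")
      case True then show ?thesis using that[of x y] xX yX rxy xy(2) by auto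
    next
      case False then show ?thesis using that[of y x] xX yX rxy xy(2) by auto
    qed
    define p where "p = l J"
    have pn: "p < n" using JK False p_def by simp
    have others: "r z \<le> p" if "z \<in> X" "z \<noteq> J" "z \<noteq> K" for z
    proof (rule ccontr)
      assume "\<not> r z \<le> p"
      let ?q = "r z - 1"
      have q: "?q < n" "p \<le> ?q" "l z \<le> ?q" "?q < r z"
        using \<open>\<not> r z \<le> p\<close> less.prems(2) that(1) by force+
      have "{z, J, K} \<subseteq> {x\<in>X. l x \<le> ?q \<and> ?q < r x}"
        using q that JK p_def by auto
      then have "card {z, J, K} \<le> card {x\<in>X. l x \<le> ?q \<and> ?q < r x}"
        by (rule card_mono[rotated]) (simp add: less.prems(1))
      also have "\<dots> \<le> 2" using less.prems(3) q(1) by blast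
      finally show False using that JK(3) by simp
    qed
    have sumX: "(\<Sum>x\<in>X. r x - l x) = (\<Sum>x\<in>X-{J,K}. r x - l x) + (n - p) + (n - l K)"
    proof -
      have "(\<Sum>x\<in>X. r x - l x) = (\<Sum>x\<in>X-{J}. r x - l x) + (r J - l J)"
        using JK less.prems(1) by (simp add: sum.remove add.commute)
      also have "(\<Sum>x\<in>X-{J}. r x - l x) = (\<Sum>x\<in>X-{J}-{K}. r x - l x) + (r K - l K)"
        using JK less.prems(1) by (subst sum.remove[of _ K]) auto
      finally show ?thesis using JK p_def by (simp add: Diff_insert2[symmetric] insert_commute)
    qed
    show ?thesis
    proof (cases "l K = p")
      case True
      have "\<exists>G\<subseteq>X-{J,K}. (\<Sum>x\<in>G. r x - l x) = p"
      proof (rule less.IH[OF pn])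
        show "finite (X - {J, K})" using less.prems(1) by simp
        show "\<forall>x\<in>X - {J, K}. l x < r x \<and> r x \<le> p" using others less.prems(2) by auto
        show "\<forall>q<p. card {x \<in> X - {J, K}. l x \<le> q \<and> q < r x} \<le> 2"
        proof (intro allI impI)
          fix q assume "q < p"
          have "card {x \<in> X - {J, K}. l x \<le> q \<and> q < r x} \<le> card {x \<in> X. l x \<le> q \<and> q < r x}"
            by (rule card_mono) (auto simp: less.prems(1))
          then show "card {x \<in> X - {J, K}. l x \<le> q \<and> q < r x} \<le> 2"
            using less.prems(3) \<open>q < p\<close> pn by (meson le_trans order.strict_trans)
        qed
        show "(\<Sum>x\<in>X - {J, K}. r x - l x) = 2 * p" using sumX less.prems(4) True pn by simp
      qed
      then obtain G where G: "G \<subseteq> X-{J,K}" "(\<Sum>x\<in>G. r x - l x) = p" by blast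
      have "finite G" using G(1) less.prems(1) finite_subset by blast
      moreover have "J \<notin> G" using G(1) by auto
      ultimately have "(\<Sum>x\<in>insert J G. r x - l x) = n" using G JK p_def pn by simp
      moreover have "insert J G \<subseteq> X" using G JK by auto
      ultimately show ?thesis by blast
    next
      case False
      then have lKp: "l K < p" using JK p_def by simp
      define r' where "r' = r(K := p)"
      have "\<exists>G\<subseteq>X-{J}. (\<Sum>x\<in>G. r' x - l x) = p"
      proof (rule less.IH[OF pn])
        show "finite (X - {J})" using less.prems(1) by simp
        show "\<forall>x\<in>X - {J}. l x < r' x \<and> r' x \<le> p" using others less.prems(2) lKp r'_def by auto
        show "\<forall>q<p. card {x \<in> X - {J}. l x \<le> q \<and> q < r' x} \<le> 2"
        proof (intro allI impI)
          fix q assume "q < p"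
          have "card {x \<in> X - {J}. l x \<le> q \<and> q < r' x} \<le> card {x \<in> X. l x \<le> q \<and> q < r x}"
            by (rule card_mono) (use \<open>q < p\<close> pn JK in \<open>auto simp: less.prems(1) r'_def\<close>)
          then show "card {x \<in> X - {J}. l x \<le> q \<and> q < r' x} \<le> 2"
            using less.prems(3) \<open>q < p\<close> pn by (meson le_trans order.strict_trans)
        qed
        have "(\<Sum>x\<in>X - {J}. r' x - l x) = (\<Sum>x\<in>X-{J,K}. r' x - l x) + (r' K - l K)"
          using JK less.prems(1) by (subst sum.remove[of _ K]) (auto simp: Diff_insert2[symmetric] insert_commute)
        also have "(\<Sum>x\<in>X-{J,K}. r' x - l x) = (\<Sum>x\<in>X-{J,K}. r x - l x)"
          by (rule sum.cong) (auto simp: r'_def)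
        finally show "(\<Sum>x\<in>X - {J}. r' x - l x) = 2 * p"
          using sumX less.prems(4) lKp pn JK by (simp add: r'_def)
      qed
      then obtain G where G: "G \<subseteq> X-{J}" "(\<Sum>x\<in>G. r' x - l x) = p" by blast
      have fG: "finite G" using G(1) less.prems(1) finite_subset by blast
      show ?thesis
      proof (cases "K \<in> G")
        case True
        have "(\<Sum>x\<in>G. r' x - l x) = (\<Sum>x\<in>G-{K}. r' x - l x) + (r' K - l K)"
          using True fG by (simp add: sum.remove add.commute)
        moreover have "(\<Sum>x\<in>G. r x - l x) = (\<Sum>x\<in>G-{K}. r x - l x) + (r K - l K)"
          using True fG by (simp add: sum.remove add.commute)
        moreover have "(\<Sum>x\<in>G-{K}. r' x - l x) = (\<Sum>x\<in>G-{K}. r x - l x)"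
          by (rule sum.cong) (auto simp: r'_def)
        ultimately have "(\<Sum>x\<in>G. r x - l x) = n" using G(2) lKp pn JK by (simp add: r'_def)
        then show ?thesis using G(1) by blast
      next
        case False
        have "(\<Sum>x\<in>G. r' x - l x) = (\<Sum>x\<in>G. r x - l x)"
          by (rule sum.cong) (use False in \<open>auto simp: r'_def\<close>)
        moreover have "J \<notin> G" using G(1) by auto
        ultimately have "(\<Sum>x\<in>insert J G. r x - l x) = n" using G fG JK p_def pn by simp
        moreover have "insert J G \<subseteq> X" using G JK by auto
        ultimately show ?thesis by blast
      qed
    qed
  qed
qed


lemma card_le2:
  assumes "finite R" "\<And>x y z. x\<in>R \<Longrightarrow> y\<in>R \<Longrightarrow> z\<in>R \<Longrightarrow> x\<noteq>y \<Longrightarrow> x\<noteq>z \<Longrightarrow> y\<noteq>z \<Longrightarrow> False"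
  shows "card R \<le> 2"
proof (rule ccontr)
  assume "\<not> card R \<le> 2"
  then have "3 \<le> card R" by simp
  then obtain T where "T \<subseteq> R" "card T = 3" by (meson obtain_subset_with_card_n)
  then obtain x y z where "T = {x,y,z}" "x\<noteq>y" "x\<noteq>z" "y\<noteq>z" by (auto simp: card_Suc_eq numeral_3_eq_3)
  then show False using assms(2)[of x y z] \<open>T \<subseteq> R\<close> by auto
qed

lemma mem_jobs: "(c,i) \<in> inst_jobs t \<longleftrightarrow> (c=0 \<and> 1\<le>i \<and> i\<le>t) \<or> ((c=1\<or>c=2) \<and> 1\<le>i \<and> i\<le>t+1)"
  by (auto simp: inst_jobs_def)

lemma finite_jobs: "finite (inst_jobs t)"
proof -
  have "inst_jobs t \<subseteq> {0..2} \<times> {0..t+1}" by (auto simp: inst_jobs_def)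
  then show ?thesis by (rule finite_subset) simp
qed

lemma jobs_ne: "(1,1) \<in> inst_jobs t" by (simp add: mem_jobs)

lemma run_same:
  fixes s p :: "nat \<times> nat \<Rightarrow> nat"
  assumes "\<forall>i\<in>J. \<forall>j\<in>J. inst_prec i j \<longrightarrow> s i + p i \<le> s j"
    "x\<in>J" "y\<in>J" "fst x = fst y" "s x \<le> \<tau>" "\<tau> < s x + p x" "s y \<le> \<tau>" "\<tau> < s y + p y"
  shows "x = y"
proof -
  have "\<not> snd x < snd y"
  proof
    assume "snd x < snd y"
    then have "s x + p x \<le> s y" using assms(1-4) unfolding inst_prec_def by blast
    then show False using assms by linarith
  qed
  moreover have "\<not> snd y < snd x"
  proof
    assume "snd y < snd x"
    then have "s y + p y \<le> s x" using assms(1-4) unfolding inst_prec_def by simp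
    then show False using assms by linarith
  qed
  ultimately show ?thesis using assms(4) by (simp add: prod_eq_iff)
qed

lemma three_vals:
  "a\<in>{0,1,2::nat} \<Longrightarrow> b\<in>{0,1,2} \<Longrightarrow> c\<in>{0,1,2} \<Longrightarrow> a\<noteq>b \<Longrightarrow> a\<noteq>c \<Longrightarrow> b\<noteq>c \<Longrightarrow>
   0\<in>{a,b,c} \<and> 1\<in>{a,b,c} \<and> 2\<in>{a,b,c}"
  by auto

lemma forward:
  fixes a :: "nat \<Rightarrow> nat" and t b :: nat
  assumes S: "S \<subseteq> {1..t}" "(\<Sum>i\<in>S. a i) = b" "(\<Sum>i\<in>{1..t}-S. a i) = b"
  shows "\<exists>s. feasible2 (inst_jobs t) inst_prec (inst_p a b) s \<and>
              makespan (inst_jobs t) (inst_p a b) s \<le> (2 * t + 3) * b"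
proof -
  define A where "A k = (\<Sum>j\<in>S \<inter> {1..<k}. a j)" for k
  define B where "B k = (\<Sum>j\<in>{1..<k} - S. a j)" for k
  define E where "E i = (if i \<in> S then A i else B i)" for i
  define s where "s (x::nat\<times>nat) = (if fst x = 0 then 2*b*snd x + E (snd x)
      else if fst x = 1 then 2*b*(snd x - 1) + A (snd x) else 2*b*(snd x - 1) + B (snd x))" for x
  have Amono: "A k \<le> A k'" if "k \<le> k'" for k k'
    unfolding A_def by (rule sum_mono2) (use that in auto)
  have Bmono: "B k \<le> B k'" if "k \<le> k'" for k k'
    unfolding B_def by (rule sum_mono2) (use that in auto)
  have Ab: "A k \<le> b" for k
    unfolding A_def S(2)[symmetric] by (rule sum_mono2) (use S(1) finite_subset in auto)
  have Bb: "B k \<le> b" if "k \<le> t+1" for k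
    unfolding B_def S(3)[symmetric] by (rule sum_mono2) (use that in auto)
  have AT: "A (t+1) = b"
  proof -
    have "S \<inter> {1..<t+1} = S" using S(1) by auto
    then show ?thesis using S(2) by (simp add: A_def)
  qed
  have ASuc: "A (Suc i) = A i + (if i \<in> S then a i else 0)" if "1 \<le> i" for i
  proof -
    have "S \<inter> {1..<Suc i} = (if i \<in> S then insert i (S \<inter> {1..<i}) else S \<inter> {1..<i})"
      using that by (auto simp: less_Suc_eq)
    then show ?thesis by (simp add: A_def)
  qed
  have BSuc: "B (Suc i) = B i + (if i \<notin> S then a i else 0)" if "1 \<le> i" for i
  proof -
    have "{1..<Suc i} - S = (if i \<notin> S then insert i ({1..<i} - S) else {1..<i} - S)"
      using that by (auto simp: less_Suc_eq)
    then show ?thesis by (simp add: B_def)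
  qed
  have E0: "2*b*i + E i + a i \<le> 2*b*i + b" if "1 \<le> i" "i \<le> t" for i
    using ASuc[OF that(1)] BSuc[OF that(1)] Ab[of "Suc i"] Bb[of "Suc i"] that
    by (auto simp: E_def split: if_splits)
  let ?J = "inst_jobs t"
  let ?p = "inst_p a b"
  have prec: "\<forall>x\<in>?J. \<forall>y\<in>?J. inst_prec x y \<longrightarrow> s x + ?p x \<le> s y"
  proof (intro ballI impI)
    fix x y assume xy: "x \<in> ?J" "y \<in> ?J" "inst_prec x y"
    obtain c i c' j where xs: "x = (c,i)" "y = (c',j)" by fastforce
    have cc: "c' = c" "i < j" using xy xs by (auto simp: inst_prec_def)
    have m: "2*b*i \<le> 2*b*(j-1)" by (intro mult_le_mono2) (use cc in auto)
    consider "c = 0" "1 \<le> i" "i \<le> t" | "c = 1" "1 \<le> i" | "c = 2" "1 \<le> i"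
      using xy(1) xs by (auto simp: mem_jobs)
    then show "s x + ?p x \<le> s y"
    proof cases
      case 1
      then have "s x + ?p x \<le> 2*b*i + b" using E0 xs by (simp add: s_def inst_p_def)
      also have "\<dots> \<le> 2*b*(i+1)" by simp
      also have "\<dots> \<le> 2*b*j" by (intro mult_le_mono2) (use cc in auto)
      also have "\<dots> \<le> s y" using xs cc 1 by (simp add: s_def)
      finally show ?thesis .
    next
      case 2
      have "s x + ?p x = 2*b*i + A i" using 2 xs by (simp add: s_def inst_p_def algebra_simps mult_eq_if)
      also have "\<dots> \<le> 2*b*(j-1) + A j" using m Amono[of i j, OF less_imp_le[OF cc(2)]] by linarith
      also have "\<dots> = s y" using xs cc 2 by (simp add: s_def)
      finally show ?thesis .
    next
      case 3
      have "s x + ?p x = 2*b*i + B i" using 3 xs by (simp add: s_def inst_p_def algebra_simps mult_eq_if)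
      also have "\<dots> \<le> 2*b*(j-1) + B j" using m Bmono[of i j, OF less_imp_le[OF cc(2)]] by linarith
      also have "\<dots> = s y" using xs cc 3 by (simp add: s_def)
      finally show ?thesis .
    qed
  qed
  let ?R = "\<lambda>\<tau>. {j\<in>?J. s j \<le> \<tau> \<and> \<tau> < s j + ?p j}"
  have notriple: False if "(0,i) \<in> ?R \<tau>" "(1,k) \<in> ?R \<tau>" "(2,k') \<in> ?R \<tau>" for i k k' \<tau>
  proof (cases "i \<in> S")
    case True
    have i: "1 \<le> i" "2*b*i + A i \<le> \<tau>" "\<tau> < 2*b*i + A (Suc i)"
      using that(1) True ASuc[of i] by (auto simp: mem_jobs s_def E_def inst_p_def)
    have k: "1 \<le> k" "2*b*(k-1) + A k \<le> \<tau>" "\<tau> < 2*b*k + A k"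
      using that(2) by (auto simp: mem_jobs s_def inst_p_def algebra_simps mult_eq_if)
    show False
    proof (cases "k \<le> i")
      case True
      have "2*b*k \<le> 2*b*i" using True by simp
      then show False using i k Amono[OF True] by linarith
    next
      case False
      have "2*b*i \<le> 2*b*(k-1)" by (intro mult_le_mono2) (use False in auto)
      then show False using i k Amono[of "Suc i" k] False by linarith
    qed
  next
    case False
    have i: "1 \<le> i" "2*b*i + B i \<le> \<tau>" "\<tau> < 2*b*i + B (Suc i)"
      using that(1) False BSuc[of i] by (auto simp: mem_jobs s_def E_def inst_p_def)
    have k: "1 \<le> k'" "2*b*(k'-1) + B k' \<le> \<tau>" "\<tau> < 2*b*k' + B k'"
      using that(3) by (auto simp: mem_jobs s_def inst_p_def algebra_simps mult_eq_if)
    show False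
    proof (cases "k' \<le> i")
      case True
      have "2*b*k' \<le> 2*b*i" using True by simp
      then show False using i k Bmono[OF True] by linarith
    next
      case False
      have "2*b*i \<le> 2*b*(k'-1)" by (intro mult_le_mono2) (use False in auto)
      then show False using i k Bmono[of "Suc i" k'] False by linarith
    qed
  qed
  have cap: "card (?R \<tau>) \<le> 2" for \<tau>
  proof (rule card_le2)
    show "finite (?R \<tau>)" using finite_jobs by simp
  next
    fix x y z assume xyz: "x \<in> ?R \<tau>" "y \<in> ?R \<tau>" "z \<in> ?R \<tau>" "x \<noteq> y" "x \<noteq> z" "y \<noteq> z"
    have d: "fst u \<noteq> fst v" if "u \<in> ?R \<tau>" "v \<in> ?R \<tau>" "u \<noteq> v" for u v
    proof
      assume "fst u = fst v"
      moreover have "u \<in> ?J" "s u \<le> \<tau>" "\<tau> < s u + ?p u" using that(1) by auto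
      moreover have "v \<in> ?J" "s v \<le> \<tau>" "\<tau> < s v + ?p v" using that(2) by auto
      ultimately have "u = v" by (intro run_same[OF prec])
      then show False using that(3) by simp
    qed
    have f3: "fst u \<in> {0,1,2}" if "u \<in> ?R \<tau>" for u
    proof -
      obtain c i where "u = (c,i)" by fastforce
      then show ?thesis using that by (auto simp: mem_jobs)
    qed
    have "0 \<in> {fst x, fst y, fst z} \<and> 1 \<in> {fst x, fst y, fst z} \<and> 2 \<in> {fst x, fst y, fst z}"
      by (rule three_vals[OF f3[OF xyz(1)] f3[OF xyz(2)] f3[OF xyz(3)] d[OF xyz(1,2,4)] d[OF xyz(1,3,5)] d[OF xyz(2,3,6)]])
    then have e: "\<exists>u\<in>{x,y,z}. fst u = 0" "\<exists>u\<in>{x,y,z}. fst u = 1" "\<exists>u\<in>{x,y,z}. fst u = 2"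
      by auto
    obtain u where "u\<in>{x,y,z}" "fst u = 0" using e(1) by blast
    moreover obtain v where "v\<in>{x,y,z}" "fst v = 1" using e(2) by blast
    moreover obtain w where "w\<in>{x,y,z}" "fst w = 2" using e(3) by blast
    ultimately have "u\<in>{x,y,z}" "v\<in>{x,y,z}" "w\<in>{x,y,z}" "fst u = 0" "fst v = 1" "fst w = 2"
      by auto
    then have "u\<in>?R \<tau>" "v\<in>?R \<tau>" "w\<in>?R \<tau>" "fst u = 0" "fst v = 1" "fst w = 2"
      using xyz(1-3) by auto
    moreover have "u = (0, snd u)" "v = (1, snd v)" "w = (2, snd w)"
      using calculation(4-6) by (metis prod.collapse)+
    ultimately have "(0, snd u) \<in> ?R \<tau>" "(1, snd v) \<in> ?R \<tau>" "(2, snd w) \<in> ?R \<tau>"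
      by (simp_all only:)
    then show False by (rule notriple)
  qed
  have feas: "feasible2 ?J inst_prec ?p s" unfolding feasible2_def using prec cap by blast
  have ends: "s x + ?p x \<le> (2*t+3)*b" if hx: "x \<in> ?J" for x
  proof -
    obtain c i where xs: "x = (c,i)" by fastforce
    consider "c = 0" "1 \<le> i" "i \<le> t" | "c = 1" "1 \<le> i" "i \<le> t+1" | "c = 2" "1 \<le> i" "i \<le> t+1"
      using hx xs by (auto simp: mem_jobs)
    then show ?thesis
    proof cases
      case 1
      then have "s x + ?p x \<le> 2*b*i + b" using E0 xs by (simp add: s_def inst_p_def)
      also have "2*b*i \<le> 2*b*t" using 1 by simp
      finally show ?thesis by (simp add: algebra_simps)
    next
      case 2
      have "s x + ?p x = 2*b*i + A i" using 2 xs by (simp add: s_def inst_p_def algebra_simps mult_eq_if)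
      also have "2*b*i \<le> 2*b*(t+1)" using 2 by (intro mult_le_mono2)
      then have "2*b*i + A i \<le> 2*b*(t+1) + b" using Ab[of i] by linarith
      finally show ?thesis by (simp add: algebra_simps)
    next
      case 3
      have "s x + ?p x = 2*b*i + B i" using 3 xs by (simp add: s_def inst_p_def algebra_simps mult_eq_if)
      also have "2*b*i \<le> 2*b*(t+1)" using 3 by (intro mult_le_mono2)
      then have "2*b*i + B i \<le> 2*b*(t+1) + b" using Bb[of i] 3 by linarith
      finally show ?thesis by (simp add: algebra_simps)
    qed
  qed
  have "makespan ?J ?p s \<le> (2*t+3)*b"
  proof -
    have ne: "?J \<noteq> {}" using jobs_ne[of t] by blast
    show ?thesis unfolding makespan_def
      by (subst Max_le_iff) (use ends ne finite_jobs[of t] in auto)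
  qed
  then show ?thesis using feas by blast
qed



lemma chain_lemma:
  fixes f :: "nat \<Rightarrow> nat" and K :: "nat set"
  assumes fin: "finite K"
    and disj: "\<forall>k\<in>K. \<forall>k'\<in>K. k \<noteq> k' \<longrightarrow> f k + L \<le> f k' \<or> f k' + L \<le> f k"
    and endT: "\<forall>k\<in>K. f k + L \<le> T"
    and TT: "T = card K * L + b" and L: "L = 2*b" and bpos: "b > 0"
  shows "\<And>\<tau>. \<tau> < T \<Longrightarrow> \<not>(\<exists>k\<in>K. f k \<le> \<tau> \<and> \<tau> < f k + L) \<Longrightarrow> \<tau> mod L < b"
    and "\<And>\<tau> \<tau>'. \<tau> < T \<Longrightarrow> \<tau>' < T \<Longrightarrow> \<not>(\<exists>k\<in>K. f k \<le> \<tau> \<and> \<tau> < f k + L) \<Longrightarrow>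
            \<not>(\<exists>k\<in>K. f k \<le> \<tau>' \<and> \<tau>' < f k + L) \<Longrightarrow> \<tau> mod L = \<tau>' mod L \<Longrightarrow> \<tau> = \<tau>'"
proof -
  define B where "B = (\<Union>k\<in>K. {f k..<f k + L})"
  define ic where "ic \<tau> = card ({..<\<tau>} - B)" for \<tau>
  have cnt: "card (B \<inter> {..<\<tau>}) = L * card {k\<in>K. f k + L \<le> \<tau>}"
    if idle: "\<not>(\<exists>k\<in>K. f k \<le> \<tau> \<and> \<tau> < f k + L)" for \<tau>
  proof -
    have "B \<inter> {..<\<tau>} = (\<Union>k\<in>{k\<in>K. f k + L \<le> \<tau>}. {f k..<f k + L})"
      unfolding B_def using idle by fastforce
    also have "card \<dots> = (\<Sum>k\<in>{k\<in>K. f k + L \<le> \<tau>}. card {f k..<f k + L})"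
    proof (rule card_UN_disjoint)
      show "finite {k \<in> K. f k + L \<le> \<tau>}" using fin by simp
      show "\<forall>i\<in>{k \<in> K. f k + L \<le> \<tau>}. finite {f i..<f i + L}" by simp
      show "\<forall>i\<in>{k \<in> K. f k + L \<le> \<tau>}. \<forall>j\<in>{k \<in> K. f k + L \<le> \<tau>}. i \<noteq> j \<longrightarrow>
          {f i..<f i + L} \<inter> {f j..<f j + L} = {}"
        using disj by fastforce
    qed
    also have "\<dots> = L * card {k\<in>K. f k + L \<le> \<tau>}" by simp
    finally show ?thesis .
  qed
  have icf: "ic \<tau> + L * card {k\<in>K. f k + L \<le> \<tau>} = \<tau>"
    if idle: "\<not>(\<exists>k\<in>K. f k \<le> \<tau> \<and> \<tau> < f k + L)" for \<tau>
  proof -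
    have "card ({..<\<tau>} - B) + card (B \<inter> {..<\<tau>}) = card {..<\<tau>}"
      by (metis Int_commute card_Diff_subset_Int card_mono finite_Int finite_lessThan inf_le2 le_add_diff_inverse2 card_Diff_subset Diff_Int_distrib2 Int_lower1 Diff_Diff_Int)
    then show ?thesis using cnt[OF idle] by (simp add: ic_def)
  qed
  have icT: "ic T = b"
  proof -
    have "\<not>(\<exists>k\<in>K. f k \<le> T \<and> T < f k + L)" using endT by fastforce
    moreover have "{k\<in>K. f k + L \<le> T} = K" using endT by auto
    ultimately show ?thesis using icf[of T] TT by (simp add: mult.commute)
  qed
  have strict: "ic \<tau> < ic \<tau>'" if "\<tau> < \<tau>'" "\<tau> \<notin> B" for \<tau> \<tau>'
    unfolding ic_def
    by (rule psubset_card_mono) (use that in auto)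
  have modv: "\<tau> mod L = ic \<tau> \<and> ic \<tau> < b" if "\<tau> < T" "\<not>(\<exists>k\<in>K. f k \<le> \<tau> \<and> \<tau> < f k + L)" for \<tau>
  proof -
    have nB: "\<tau> \<notin> B" using that(2) by (auto simp: B_def)
    have "ic \<tau> < b" using strict[OF that(1) nB] icT by simp
    moreover have "\<tau> mod L = ic \<tau>"
    proof -
      have "\<tau> = ic \<tau> + L * card {k\<in>K. f k + L \<le> \<tau>}" using icf[OF that(2)] by simp
      then have "\<tau> mod L = ic \<tau> mod L" by (metis mod_mult_self2)
      also have "\<dots> = ic \<tau>" using \<open>ic \<tau> < b\<close> L by simp
      finally show ?thesis .
    qed
    ultimately show ?thesis by simp
  qed
  show "\<And>\<tau>. \<tau> < T \<Longrightarrow> \<not>(\<exists>k\<in>K. f k \<le> \<tau> \<and> \<tau> < f k + L) \<Longrightarrow> \<tau> mod L < b"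
    using modv by simp
  show "\<tau> = \<tau>'" if "\<tau> < T" "\<tau>' < T" "\<not>(\<exists>k\<in>K. f k \<le> \<tau> \<and> \<tau> < f k + L)"
            "\<not>(\<exists>k\<in>K. f k \<le> \<tau>' \<and> \<tau>' < f k + L)" "\<tau> mod L = \<tau>' mod L" for \<tau> \<tau>'
  proof (rule ccontr)
    assume ne: "\<tau> \<noteq> \<tau>'"
    have e: "ic \<tau> = ic \<tau>'" using modv[OF that(1,3)] modv[OF that(2,4)] that(5) by simp
    have n1: "\<tau> \<notin> B" "\<tau>' \<notin> B" using that(3,4) by (auto simp: B_def)
    show False
    proof (cases "\<tau> < \<tau>'")
      case True then show False using strict[OF True n1(1)] e by simp
    next
      case False then have "\<tau>' < \<tau>" using ne by simp
      then show False using strict[OF _ n1(2)] e by fastforce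
    qed
  qed
qed



lemma backward:
  fixes a :: "nat \<Rightarrow> nat" and t b :: nat and s :: "nat \<times> nat \<Rightarrow> nat"
  assumes pos: "\<forall>i\<in>{1..t}. a i > 0"
    and sum: "(\<Sum>i=1..t. a i) = 2 * b"
    and feas: "feasible2 (inst_jobs t) inst_prec (inst_p a b) s"
    and mk: "makespan (inst_jobs t) (inst_p a b) s \<le> (2 * t + 3) * b"
    and bpos: "b > 0"
  shows "\<exists>G\<subseteq>{1..t}. (\<Sum>i\<in>G. a i) = b"
proof -
  let ?J = "inst_jobs t"
  let ?p = "inst_p a b"
  let ?T = "(2 * t + 3) * b"
  let ?R = "\<lambda>\<tau>. {j\<in>?J. s j \<le> \<tau> \<and> \<tau> < s j + ?p j}"
  have prec: "\<forall>x\<in>?J. \<forall>y\<in>?J. inst_prec x y \<longrightarrow> s x + ?p x \<le> s y"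
    and cap: "\<And>\<tau>. card (?R \<tau>) \<le> 2" using feas unfolding feasible2_def by blast+
  have ends: "s x + ?p x \<le> ?T" if "x \<in> ?J" for x
  proof -
    have "s x + ?p x \<le> makespan ?J ?p s" unfolding makespan_def
      using that finite_jobs[of t] by (intro Max_ge) auto
    then show ?thesis using mk by simp
  qed
  define idle where "idle c \<tau> \<longleftrightarrow> \<not>(\<exists>k\<in>{1..t+1}. s (c,k) \<le> \<tau> \<and> \<tau> < s (c,k) + 2*b)" for c \<tau>
  have chain: "(\<forall>\<tau>. \<tau> < ?T \<longrightarrow> idle c \<tau> \<longrightarrow> \<tau> mod (2*b) < b) \<and>
     (\<forall>\<tau> \<tau>'. \<tau> < ?T \<longrightarrow> \<tau>' < ?T \<longrightarrow> idle c \<tau> \<longrightarrow> idle c \<tau>' \<longrightarrow> \<tau> mod (2*b) = \<tau>' mod (2*b) \<longrightarrow> \<tau> = \<tau>')"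
    if c: "c = 1 \<or> c = 2" for c
  proof -
    have pc: "?p (c,k) = 2*b" for k using c by (auto simp: inst_p_def)
    have fin: "finite {1..t+1}" by simp
    have disj: "\<forall>k\<in>{1..t+1}. \<forall>k'\<in>{1..t+1}. k \<noteq> k' \<longrightarrow> s (c,k) + 2*b \<le> s (c,k') \<or> s (c,k') + 2*b \<le> s (c,k)"
    proof (intro ballI impI)
      fix k k' assume kk: "k \<in> {1..t+1}" "k' \<in> {1..t+1}" "k \<noteq> k'"
      have mem: "(c,k) \<in> ?J" "(c,k') \<in> ?J" using kk c by (auto simp: mem_jobs)
      show "s (c,k) + 2*b \<le> s (c,k') \<or> s (c,k') + 2*b \<le> s (c,k)"
      proof (cases "k < k'")
        case True then show ?thesis using bspec[OF bspec[OF prec mem(1)] mem(2)] pc[of k] by (simp add: inst_prec_def)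
      next
        case False then have "k' < k" using kk by simp
        then show ?thesis using bspec[OF bspec[OF prec mem(2)] mem(1)] pc[of k'] by (simp add: inst_prec_def)
      qed
    qed
    have endT: "\<forall>k\<in>{1..t+1}. s (c,k) + 2*b \<le> ?T"
    proof
      fix k assume "k \<in> {1..t+1}"
      then have "(c,k) \<in> ?J" using c by (auto simp: mem_jobs)
      then show "s (c,k) + 2*b \<le> ?T" using ends[of "(c,k)"] pc[of k] by simp
    qed
    have TT: "?T = card {1..t+1} * (2*b) + b" by (simp add: algebra_simps)
    note cl = chain_lemma[where f = "\<lambda>k. s (c,k)" and K = "{1..t+1}", OF fin disj endT TT refl bpos]
    show ?thesis using cl unfolding idle_def by blast
  qed
  have run0: "\<tau> < ?T \<and> (idle 1 \<tau> \<or> idle 2 \<tau>)"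
    if i: "i \<in> {1..t}" "s (0,i) \<le> \<tau>" "\<tau> < s (0,i) + a i" for i \<tau>
  proof
    have mi: "(0,i) \<in> ?J" using i by (auto simp: mem_jobs)
    show "\<tau> < ?T" using ends[OF mi] i by (simp add: inst_p_def)
    show "idle 1 \<tau> \<or> idle 2 \<tau>"
    proof (rule ccontr)
      assume "\<not> (idle 1 \<tau> \<or> idle 2 \<tau>)"
      then obtain k k' where k: "k \<in> {1..t+1}" "s (1,k) \<le> \<tau>" "\<tau> < s (1,k) + 2*b"
        and k': "k' \<in> {1..t+1}" "s (2,k') \<le> \<tau>" "\<tau> < s (2,k') + 2*b"
        unfolding idle_def by blast
      have "{(0,i),(1,k),(2,k')} \<subseteq> ?R \<tau>"
        using i k k' by (auto simp: mem_jobs inst_p_def)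
      then have "card {(0::nat,i),(1::nat,k),(2,k')} \<le> card (?R \<tau>)"
        by (rule card_mono[rotated]) (simp add: finite_jobs)
      also have "\<dots> \<le> 2" by (rule cap)
      finally show False by simp
    qed
  qed
  have res: "\<tau> mod (2*b) < b" if "i \<in> {1..t}" "s (0,i) \<le> \<tau>" "\<tau> < s (0,i) + a i" for i \<tau>
    using run0[OF that] chain[of 1] chain[of 2] by auto
  define l where "l i = s (0,i) mod (2*b)" for i
  have lr: "l i + a i \<le> b" if i: "i \<in> {1..t}" for i
  proof -
    have ai: "a i > 0" using pos i by blast
    have lb: "l i < b" using res[OF i, of "s (0,i)"] ai by (simp add: l_def)
    show ?thesis
    proof (rule ccontr)
      assume "\<not> l i + a i \<le> b"
      define \<tau> where "\<tau> = s (0,i) + (b - l i)"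
      have "s (0,i) \<le> \<tau>" "\<tau> < s (0,i) + a i" using \<open>\<not> l i + a i \<le> b\<close> lb by (auto simp: \<tau>_def)
      then have "\<tau> mod (2*b) < b" by (rule res[OF i])
      moreover have "\<tau> mod (2*b) = b"
      proof -
        have "\<tau> mod (2*b) = (l i + (b - l i)) mod (2*b)" unfolding \<tau>_def l_def by (simp add: mod_add_left_eq)
        also have "\<dots> = b" using lb bpos by simp
        finally show ?thesis .
      qed
      ultimately show False by simp
    qed
  qed
  have cov: "card {i\<in>{1..t}. l i \<le> q \<and> q < l i + a i} \<le> 2" if q: "q < b" for q
  proof (rule card_le2)
    show "finite {i\<in>{1..t}. l i \<le> q \<and> q < l i + a i}" by simp
  next
    define \<sigma> where "\<sigma> x = s (0,x) + (q - l x)" for x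
    have sp: "s (0,x) \<le> \<sigma> x \<and> \<sigma> x < s (0,x) + a x \<and> \<sigma> x mod (2*b) = q"
      if "x \<in> {i\<in>{1..t}. l i \<le> q \<and> q < l i + a i}" for x
    proof -
      have "\<sigma> x mod (2*b) = (l x + (q - l x)) mod (2*b)" unfolding \<sigma>_def l_def by (simp add: mod_add_left_eq)
      also have "\<dots> = q" using that q by simp
      finally show ?thesis using that by (auto simp: \<sigma>_def)
    qed
    have idl: "\<sigma> x < ?T \<and> (idle 1 (\<sigma> x) \<or> idle 2 (\<sigma> x))"
      if "x \<in> {i\<in>{1..t}. l i \<le> q \<and> q < l i + a i}" for x
      using run0[of x "\<sigma> x"] sp[OF that] that by auto
    have dist: "\<sigma> x \<noteq> \<sigma> y" if "x \<in> {i\<in>{1..t}. l i \<le> q \<and> q < l i + a i}"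
      "y \<in> {i\<in>{1..t}. l i \<le> q \<and> q < l i + a i}" "x \<noteq> y" for x y
    proof
      assume e: "\<sigma> x = \<sigma> y"
      have m: "(0,x) \<in> ?J" "(0,y) \<in> ?J" using that by (auto simp: mem_jobs)
      have "(0,x) = (0::nat,y)"
        by (rule run_same[OF prec m, of "\<sigma> x"]) (use sp[OF that(1)] sp[OF that(2)] e in \<open>auto simp: inst_p_def\<close>)
      then show False using that(3) by simp
    qed
    have same: "False" if "x \<in> {i\<in>{1..t}. l i \<le> q \<and> q < l i + a i}"
      "y \<in> {i\<in>{1..t}. l i \<le> q \<and> q < l i + a i}" "x \<noteq> y" "idle c (\<sigma> x)" "idle c (\<sigma> y)"
      "c = 1 \<or> c = 2" for x y c
    proof -
      have "\<sigma> x = \<sigma> y"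
        using chain[OF that(6)] idl[OF that(1)] idl[OF that(2)] sp[OF that(1)] sp[OF that(2)] that(4,5) by metis
      then show False using dist[OF that(1-3)] by simp
    qed
    fix x y z assume xyz: "x \<in> {i\<in>{1..t}. l i \<le> q \<and> q < l i + a i}"
      "y \<in> {i\<in>{1..t}. l i \<le> q \<and> q < l i + a i}" "z \<in> {i\<in>{1..t}. l i \<le> q \<and> q < l i + a i}"
      "x \<noteq> y" "x \<noteq> z" "y \<noteq> z"
    show False
      using idl[OF xyz(1)] idl[OF xyz(2)] idl[OF xyz(3)]
        same[OF xyz(1,2,4)] same[OF xyz(1,3,5)] same[OF xyz(2,3,6)] by blast
  qed
  have "\<exists>G\<subseteq>{1..t}. (\<Sum>x\<in>G. (l x + a x) - l x) = b"
  proof (rule cover_split)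
    show "finite {1..t}" by simp
    show "\<forall>x\<in>{1..t}. l x < l x + a x \<and> l x + a x \<le> b" using pos lr by auto
    show "\<forall>p<b. card {x \<in> {1..t}. l x \<le> p \<and> p < l x + a x} \<le> 2" using cov by blast
    show "(\<Sum>x\<in>{1..t}. l x + a x - l x) = 2 * b" using sum by simp
  qed
  then show ?thesis by simp
qed


theorem mainTheorem2:
  fixes a :: "nat \<Rightarrow> nat" and t b :: nat
  assumes pos: "\<forall>i\<in>{1..t}. a i > 0"
    and sum: "(\<Sum>i=1..t. a i) = 2 * b"
  shows "(\<exists>S\<subseteq>{1..t}. (\<Sum>i\<in>S. a i) = (\<Sum>i\<in>{1..t} - S. a i)) \<longleftrightarrow>
         (\<exists>s. feasible2 (inst_jobs t) inst_prec (inst_p a b) s \<and>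
              makespan (inst_jobs t) (inst_p a b) s \<le> (2 * t + 3) * b)"
proof
  assume "\<exists>S\<subseteq>{1..t}. (\<Sum>i\<in>S. a i) = (\<Sum>i\<in>{1..t} - S. a i)"
  then obtain S where S: "S \<subseteq> {1..t}" "(\<Sum>i\<in>S. a i) = (\<Sum>i\<in>{1..t} - S. a i)" by blast
  have "(\<Sum>i\<in>{1..t}. a i) = (\<Sum>i\<in>{1..t} - S. a i) + (\<Sum>i\<in>S. a i)"
    using S(1) by (simp add: sum.subset_diff)
  then have "(\<Sum>i\<in>S. a i) = b" "(\<Sum>i\<in>{1..t} - S. a i) = b" using S(2) sum by simp_all
  then show "\<exists>s. feasible2 (inst_jobs t) inst_prec (inst_p a b) s \<and>
              makespan (inst_jobs t) (inst_p a b) s \<le> (2 * t + 3) * b"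
    using forward[OF S(1)] by blast
next
  assume "\<exists>s. feasible2 (inst_jobs t) inst_prec (inst_p a b) s \<and>
              makespan (inst_jobs t) (inst_p a b) s \<le> (2 * t + 3) * b"
  then obtain s where s: "feasible2 (inst_jobs t) inst_prec (inst_p a b) s"
    "makespan (inst_jobs t) (inst_p a b) s \<le> (2 * t + 3) * b" by blast
  show "\<exists>S\<subseteq>{1..t}. (\<Sum>i\<in>S. a i) = (\<Sum>i\<in>{1..t} - S. a i)"
  proof (cases "b = 0")
    case True
    then show ?thesis using sum by (intro exI[of _ "{}"]) simp
  next
    case False
    then obtain G where G: "G \<subseteq> {1..t}" "(\<Sum>i\<in>G. a i) = b"
      using backward[OF pos sum s] by blast
    have "(\<Sum>i\<in>{1..t}. a i) = (\<Sum>i\<in>{1..t} - G. a i) + (\<Sum>i\<in>G. a i)"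
      using G(1) by (simp add: sum.subset_diff)
    then have "(\<Sum>i\<in>{1..t} - G. a i) = b" using G(2) sum by simp
    then show ?thesis using G by auto
  qed
qed

end
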